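(* For every integer $x\ge3$, the number $\frac{x^2(x^2+4)}{5x^2-4}$ is not an integer. *)

theory Defs
  imports Complex_Main
begin

end

theory Submission
  imports Defs
begin

theorem mainTheorem16:
  fixes x :: int
  assumes "x \<ge> 3"
  shows "(of_int (x^2 * (x^2 + 4)) / of_int (5 * x^2 - 4) :: rat) \<notin> \<int>"
proof
  assume "(of_int (x^2 * (x^2 + 4)) / of_int (5 * x^2 - 4) :: rat) \<in> \<int>"
  then obtain k where k: "(of_int (x^2 * (x^2 + 4)) / of_int (5 * x^2 - 4) :: rat) = of_int k"
    by (auto elim: Ints_cases)
  have "x * x \<ge> 3 * 3" using assms by (intro mult_mono) auto
  hence x9: "x^2 \<ge> 9" by (simp add: power2_eq_square)
  hence dpos: "5 * x^2 - 4 > 0" by simp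
  have "(of_int (x^2 * (x^2 + 4)) :: rat) = of_int k * of_int (5 * x^2 - 4)"
  proof -
    have "(of_int (5 * x^2 - 4) :: rat) \<noteq> 0" using dpos by (simp only: of_int_eq_0_iff)
    thus ?thesis using k by (simp only: divide_eq_eq) simp
  qed
  hence eq: "x^2 * (x^2 + 4) = k * (5 * x^2 - 4)"
    by (metis of_int_eq_iff of_int_mult)
  have "25 * (x^2 * (x^2 + 4)) = (5 * x^2 - 4) * (5 * x^2 + 24) + 96"
    by (simp add: algebra_simps power2_eq_square)
  hence "96 = (5 * x^2 - 4) * (25 * k - (5 * x^2 + 24))"
    using eq by (simp add: algebra_simps)
  hence dv: "(5 * x^2 - 4) dvd 96" by (metis dvd_triv_left)
  hence le: "5 * x^2 - 4 \<le> 96" by (simp add: zdvd_imp_le)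
  have "x \<le> 4"
  proof (rule ccontr)
    assume "\<not> x \<le> 4"
    hence "x \<ge> 5" by simp
    hence "x * x \<ge> 5 * 5" by (intro mult_mono) auto
    thus False using le by (simp add: power2_eq_square)
  qed
  hence "x = 3 \<or> x = 4" using assms by auto
  thus False using dv by auto
qed

end
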